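(* Let $R$ be a ring, $n \in \mathbb{N}$, and $S_1,\dots,S_n$ sets with $|S_i| \geq \aleph_{i-1}$ for each $i$. For each $i \in [n]$ let \[v_i: \prod_{j \in [n]\setminus\{i\}} S_j \to \mathrm{Hom}^{\mathrm{fin}}_{\mathrm{Set}}\Big(\prod_{j \in [n]} S_j, R\Big)\] be an arbitrary map of sets. Then there exists $s \in \prod_{j \in [n]} S_j$ such that $v_i(p^n_i(s))(s) = 0$ for every $i \in [n]$.
   Context: $[n]=\{1,\dots,n\}$. For a set $T$ and ring $R$, $\mathrm{Hom}^{\mathrm{fin}}_{\mathrm{Set}}(T,R)$ is the set of functions $T \to R$ that vanish outside a finite subset of $T$. For $s = (s_1,\dots,s_n) \in \prod_{j \in [n]} S_j$, $p^n_i(s) = (s_1,\dots,s_{i-1},s_{i+1},\dots,s_n) \in \prod_{j \neq i} S_j$ is the point with the $i$-th coordinate omitted. *)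

theory Defs
  imports Main "HOL-Library.FuncSet"
begin

text \<open>Since \<open>cardSuc\<close> changes the carrier type, the
  alephs are represented by sets realising them:
  \<open>is_aleph k B\<close> means |B| = aleph_k.\<close>

fun is_aleph :: "nat \<Rightarrow> 'a set \<Rightarrow> bool" where
  "is_aleph 0 B = ((card_of B, natLeq) \<in> ordIso)"
| "is_aleph (Suc k) B =
     (\<exists>C :: 'a set. is_aleph k C \<and> (card_of B, cardSuc (card_of C)) \<in> ordIso)"

definition aleph_le :: "nat \<Rightarrow> 'a set \<Rightarrow> bool" where
  "aleph_le k A = (\<exists>B :: 'a set. is_aleph k B \<and> (card_of B, card_of A) \<in> ordLeq)"

end

theory Submission
  imports Defs
begin

unbundle cardinal_syntax

lemma fin_le_inf: "finite A \<Longrightarrow> infinite B \<Longrightarrow> |A| \<le>o |B|"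
  by (rule ordLess_imp_ordLeq, rule finite_ordLess_infinite) (simp_all add: Field_card_of card_of_well_order_on)

lemma is_aleph_inf: "is_aleph k (B::'a set) \<Longrightarrow> infinite B"
proof (induction k arbitrary: B)
  case 0
  then show ?case using infinite_iff_natLeq_ordLeq ordIso_iff_ordLeq by auto
next
  case (Suc k)
  then obtain C :: "'a set" where C: "is_aleph k C" "|B| =o cardSuc |C|" by auto
  have "|C| <o cardSuc |C|" by (simp add: cardSuc_greater card_of_Card_order)
  then have "|C| \<le>o |B|" using C ordIso_symmetric ordLess_imp_ordLeq ordLeq_ordIso_trans by blast
  then show ?case using Suc.IH C card_of_ordLeq_infinite by blast
qed

lemma is_aleph_iso: "is_aleph k (B::'a set) \<Longrightarrow> is_aleph k (B'::'a set) \<Longrightarrow> |B| =o |B'|"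
proof (induction k arbitrary: B B')
  case 0
  then show ?case by simp (meson ordIso_symmetric ordIso_transitive)
next
  case (Suc k)
  then obtain C :: "'a set" where C: "is_aleph k C" "|B| =o cardSuc |C|" by auto
  from Suc obtain C' :: "'a set" where C': "is_aleph k C'" "|B'| =o cardSuc |C'|" by auto
  have "|C| =o |C'|" using Suc.IH C C' by blast
  then have CC: "cardSuc |C| =o cardSuc |C'|" by (simp add: cardSuc_invar_ordIso card_of_Card_order)
  show ?case using ordIso_transitive[OF ordIso_transitive[OF C(2) CC] ordIso_symmetric[OF C'(2)]] .
qed

lemma is_aleph_Suc_less: "is_aleph (Suc k) (B::'a set) \<Longrightarrow> is_aleph k (C::'a set) \<Longrightarrow> |C| <o |B|"
proof -
  assume B: "is_aleph (Suc k) B" and C: "is_aleph k C"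
  then obtain C' :: "'a set" where C': "is_aleph k C'" "|B| =o cardSuc |C'|" by auto
  have "|C'| <o cardSuc |C'|" by (simp add: cardSuc_greater card_of_Card_order)
  then have "|C'| <o |B|" using C' ordIso_symmetric ordLess_ordIso_trans by blast
  moreover have "|C| =o |C'|" using is_aleph_iso C C' by blast
  ultimately show ?thesis using ordIso_ordLess_trans by blast
qed

lemma is_aleph_mono: "is_aleph k (B::'a set) \<Longrightarrow> is_aleph k' (B'::'a set) \<Longrightarrow> k \<le> k' \<Longrightarrow> |B| \<le>o |B'|"
proof (induction k' arbitrary: B')
  case 0
  then show ?case using is_aleph_iso ordIso_iff_ordLeq by fastforce
next
  case (Suc k')
  show ?case
  proof (cases "k = Suc k'")
    case True
    then show ?thesis using Suc is_aleph_iso ordIso_iff_ordLeq by blast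
  next
    case False
    from Suc obtain C :: "'a set" where C: "is_aleph k' C" by auto
    have "|B| \<le>o |C|" using Suc.IH[OF Suc.prems(1) C] Suc.prems False by simp
    then show ?thesis using is_aleph_Suc_less[OF Suc.prems(2) C] ordLeq_ordLess_trans ordLess_imp_ordLeq by blast
  qed
qed

lemma shrink: "|B| \<le>o |S| \<Longrightarrow> \<exists>T\<subseteq>S. |T| =o |B|"
proof -
  assume "|B| \<le>o |S|"
  then have "\<exists>f. inj_on f B \<and> f ` B \<subseteq> S" by (simp only: card_of_ordLeq[symmetric])
  then obtain f where f: "inj_on f B" "f ` B \<subseteq> S" by blast
  then have "bij_betw f B (f ` B)" by (simp add: inj_on_imp_bij_betw)
  then have "|B| =o |f ` B|" using card_of_ordIso by blast
  then show ?thesis using f ordIso_symmetric by blast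
qed

lemma prod_le: fixes n :: nat shows "infinite C \<Longrightarrow> (\<forall>j\<in>{1..n}. ( |S j| \<le>o |C| )) \<Longrightarrow> |PiE {1..n} S| \<le>o |C|"
proof (induction n)
  case 0
  then show ?case using fin_le_inf[of "{\<lambda>x. undefined}" C] by simp
next
  case (Suc n)
  have IH: "|PiE {1..n} S| \<le>o |C|" using Suc by auto
  have Sn: "|S (Suc n)| \<le>o |C|" using Suc.prems(2) by simp
  have "|PiE {1..n} S \<times> S (Suc n)| \<le>o |C|"
    using card_of_Times_ordLeq_infinite_Field[of "|C|"] IH Sn Suc.prems(1)
    by (simp add: card_of_card_order_on Field_card_of)
  moreover have "|PiE {1..Suc n} S| \<le>o |PiE {1..n} S \<times> S (Suc n)|"
  proof -
    have "inj_on (\<lambda>f. (restrict f {1..n}, f (Suc n))) (PiE {1..Suc n} S)"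
    proof (rule inj_onI)
      fix f g assume f: "f \<in> PiE {1..Suc n} S" and g: "g \<in> PiE {1..Suc n} S"
        and eq: "(restrict f {1..n}, f (Suc n)) = (restrict g {1..n}, g (Suc n))"
      show "f = g"
      proof
        fix x
        show "f x = g x"
        proof (cases "x \<in> {1..n}")
          case True then show ?thesis using eq by (metis prod.inject restrict_apply')
        next
          case False
          then show ?thesis using eq f g
            by (cases "x = Suc n") (auto simp: PiE_def extensional_def)
        qed
      qed
    qed
    moreover have "(\<lambda>f. (restrict f {1..n}, f (Suc n))) ` PiE {1..Suc n} S \<subseteq> PiE {1..n} S \<times> S (Suc n)"
      by auto
    ultimately show ?thesis using card_of_ordLeq by blast
  qed
  ultimately show ?case using ordLeq_transitive by blast
qed


lemma kura:
  fixes n :: nat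
  shows "\<And>(S :: nat \<Rightarrow> 'a set) (F :: nat \<Rightarrow> (nat \<Rightarrow> 'a) \<Rightarrow> 'a set).
    (\<forall>i\<in>{1..n}. aleph_le (i-1) (S i)) \<Longrightarrow>
    (\<forall>i\<in>{1..n}. \<forall>t\<in>PiE ({1..n}-{i}) S. finite (F i t)) \<Longrightarrow>
    \<exists>s\<in>PiE {1..n} S. \<forall>i\<in>{1..n}. s i \<notin> F i (restrict s ({1..n}-{i}))"
proof (induction n)
  case 0
  then show ?case by auto
next
  case (Suc n)
  have "\<forall>j\<in>{1..n}. \<exists>T. T \<subseteq> S j \<and> (\<exists>B::'a set. is_aleph (j-1) B \<and> |T| =o |B| )"
  proof
    fix j assume j: "j \<in> {1..n}"
    then have "aleph_le (j-1) (S j)" using Suc.prems(1) by auto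
    then obtain B :: "'a set" where B: "is_aleph (j-1) B" "|B| \<le>o |S j|" unfolding aleph_le_def by blast
    then obtain T where "T \<subseteq> S j" "|T| =o |B|" using shrink by blast
    then show "\<exists>T. T \<subseteq> S j \<and> (\<exists>B::'a set. is_aleph (j-1) B \<and> |T| =o |B| )" using B by blast
  qed
  then obtain S' where S': "\<forall>j\<in>{1..n}. S' j \<subseteq> S j \<and> (\<exists>B::'a set. is_aleph (j-1) B \<and> |S' j| =o |B| )"
    by metis
  have S'al: "\<forall>i\<in>{1..n}. aleph_le (i-1) (S' i)"
    unfolding aleph_le_def using S' ordIso_iff_ordLeq ordIso_symmetric by blast
  define P where "P = PiE {1..n} S'"
  define D where "D = (\<Union>u\<in>P. F (Suc n) u)"
  have PS: "P \<subseteq> PiE ({1..Suc n} - {Suc n}) S"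
  proof -
    have "{1..Suc n} - {Suc n} = {1..n}" by auto
    then show ?thesis unfolding P_def using S' by (auto simp: PiE_iff)
  qed
  have Dfin: "\<forall>u\<in>P. finite (F (Suc n) u)" using Suc.prems(2) PS by auto
  have al_last: "aleph_le n (S (Suc n))" using Suc.prems(1)[rule_format, of "Suc n"] by simp
  have "\<exists>c. c \<in> S (Suc n) - D"
  proof (cases n)
    case 0
    have "aleph_le 0 (S 1)" using Suc.prems(1) 0 by auto
    then obtain B :: "'a set" where B: "is_aleph 0 B" "|B| \<le>o |S 1|" unfolding aleph_le_def by blast
    then have inf: "infinite (S 1)" using is_aleph_inf card_of_ordLeq_infinite by blast
    have "P = {\<lambda>x. undefined}" unfolding P_def using 0 by simp
    then have "finite D" unfolding D_def using Dfin by auto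
    then have "infinite (S 1 - D)" using inf by simp
    then show ?thesis using 0 by (metis finite.emptyI ex_in_conv One_nat_def)
  next
    case (Suc m)
    from al_last obtain B :: "'a set" where B: "is_aleph n B" "|B| \<le>o |S (Suc n)|" unfolding aleph_le_def by blast
    then obtain C :: "'a set" where C: "is_aleph m C" using Suc by auto
    have CB: "|C| <o |B|" using is_aleph_Suc_less B C Suc by blast
    have Cinf: "infinite C" using C is_aleph_inf by blast
    have "\<forall>j\<in>{1..n}. |S' j| \<le>o |C|"
    proof
      fix j assume j: "j \<in> {1..n}"
      then obtain B' :: "'a set" where B': "is_aleph (j-1) B'" "|S' j| =o |B'|" using S' by blast
      have "|B'| \<le>o |C|" using is_aleph_mono[OF B'(1) C] j Suc by auto
      then show "|S' j| \<le>o |C|" using B'(2) ordIso_ordLeq_trans by blast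
    qed
    then have "|P| \<le>o |C|" unfolding P_def using prod_le Cinf by blast
    moreover have "\<forall>u\<in>P. |F (Suc n) u| \<le>o |C|" using Dfin fin_le_inf Cinf by blast
    ultimately have "|D| \<le>o |C|" unfolding D_def using card_of_UNION_ordLeq_infinite Cinf by blast
    then have DS: "|D| <o |S (Suc n)|" using CB B(2) ordLeq_ordLess_trans ordLess_ordLeq_trans by blast
    show ?thesis
    proof (rule ccontr)
      assume "\<nexists>c. c \<in> S (Suc n) - D"
      then have "S (Suc n) \<subseteq> D" by blast
      then have "|S (Suc n)| \<le>o |D|" by (rule card_of_mono1)
      then show False using DS not_ordLess_ordLeq by blast
    qed
  qed
  then obtain c where c: "c \<in> S (Suc n)" "c \<notin> D" by blast
  define F' where "F' = (\<lambda>i t. F i (t(Suc n := c)))"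
  have ext: "t(Suc n := c) \<in> PiE ({1..Suc n}-{i}) S" if "i \<in> {1..n}" "t \<in> PiE ({1..n}-{i}) S'" for i t
  proof -
    have "\<forall>j\<in>{1..Suc n}-{i}. (t(Suc n := c)) j \<in> S j"
    proof
      fix j assume j: "j \<in> {1..Suc n}-{i}"
      show "(t(Suc n := c)) j \<in> S j"
      proof (cases "j = Suc n")
        case True then show ?thesis using c(1) by simp
      next
        case False
        then have "j \<in> {1..n}-{i}" using j by auto
        then have "j \<in> {1..n}" "t j \<in> S' j" using that(2) by (auto simp: PiE_iff)
        then show ?thesis using S' False by auto
      qed
    qed
    moreover have "t(Suc n := c) \<in> extensional ({1..Suc n}-{i})"
      using that by (auto simp: PiE_iff extensional_def)
    ultimately show ?thesis by (simp add: PiE_iff)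
  qed
  have "\<forall>i\<in>{1..n}. \<forall>t\<in>PiE ({1..n}-{i}) S'. finite (F' i t)"
  proof (intro ballI)
    fix i t assume it: "i \<in> {1..n}" "t \<in> PiE ({1..n}-{i}) S'"
    have "t(Suc n := c) \<in> PiE ({1..Suc n}-{i}) S" using ext[OF it] .
    moreover have "i \<in> {1..Suc n}" using it(1) by simp
    ultimately show "finite (F' i t)" unfolding F'_def using Suc.prems(2) by blast
  qed
  then have "\<exists>s\<in>PiE {1..n} S'. \<forall>i\<in>{1..n}. s i \<notin> F' i (restrict s ({1..n}-{i}))"
    by (rule Suc.IH[OF S'al])
  then obtain s' where s': "s' \<in> PiE {1..n} S'" "\<forall>i\<in>{1..n}. s' i \<notin> F' i (restrict s' ({1..n}-{i}))"
    by blast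
  define s where "s = s'(Suc n := c)"
  have "s \<in> PiE {1..Suc n} S"
  proof -
    have "\<forall>j\<in>{1..Suc n}. s j \<in> S j"
    proof
      fix j assume j: "j \<in> {1..Suc n}"
      show "s j \<in> S j"
      proof (cases "j = Suc n")
        case True then show ?thesis using c(1) unfolding s_def by simp
      next
        case False
        then have "j \<in> {1..n}" "s' j \<in> S' j" using j s'(1) by (auto simp: PiE_iff)
        then show ?thesis using S' False unfolding s_def by auto
      qed
    qed
    moreover have "s \<in> extensional {1..Suc n}"
      using s'(1) unfolding s_def by (auto simp: PiE_iff extensional_def)
    ultimately show ?thesis by (simp add: PiE_iff)
  qed
  moreover have "\<forall>i\<in>{1..Suc n}. s i \<notin> F i (restrict s ({1..Suc n}-{i}))"
  proof
    fix i assume i: "i \<in> {1..Suc n}"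
    show "s i \<notin> F i (restrict s ({1..Suc n}-{i}))"
    proof (cases "i = Suc n")
      case True
      have "restrict s ({1..Suc n}-{i}) = s'"
      proof
        fix x show "restrict s ({1..Suc n}-{i}) x = s' x"
          using s'(1) True unfolding s_def by (auto simp: PiE_iff extensional_def)
      qed
      then show ?thesis using c(2) s'(1) True unfolding D_def P_def s_def by auto
    next
      case False
      then have i': "i \<in> {1..n}" using i by auto
      have "restrict s ({1..Suc n}-{i}) = (restrict s' ({1..n}-{i}))(Suc n := c)"
      proof
        fix x show "restrict s ({1..Suc n}-{i}) x = ((restrict s' ({1..n}-{i}))(Suc n := c)) x"
          using i' unfolding s_def by (auto simp: restrict_def)
      qed
      moreover have "s i = s' i" using i' unfolding s_def by auto
      ultimately show ?thesis using s'(2) i' unfolding F'_def by auto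
    qed
  qed
  ultimately show ?case by blast
qed


theorem mainTheorem4:
  fixes n :: nat
    and S :: "nat \<Rightarrow> 'a set"
    and v :: "nat \<Rightarrow> (nat \<Rightarrow> 'a) \<Rightarrow> ((nat \<Rightarrow> 'a) \<Rightarrow> 'r::ring)"
  assumes card: "\<And>i. i \<in> {1..n} \<Longrightarrow> aleph_le (i - 1) (S i)"
    and fin: "\<And>i t. i \<in> {1..n} \<Longrightarrow> t \<in> (\<Pi>\<^sub>E j\<in>{1..n} - {i}. S j) \<Longrightarrow>
              finite {s \<in> (\<Pi>\<^sub>E j\<in>{1..n}. S j). v i t s \<noteq> 0}"
  shows "\<exists>s \<in> (\<Pi>\<^sub>E j\<in>{1..n}. S j).
           \<forall>i \<in> {1..n}. v i (restrict s ({1..n} - {i})) s = 0"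
  proof -
  define F where "F = (\<lambda>i t. (\<lambda>s. s i) ` {s \<in> (\<Pi>\<^sub>E j\<in>{1..n}. S j). v i t s \<noteq> 0})"
  have "\<exists>s\<in>PiE {1..n} S. \<forall>i\<in>{1..n}. s i \<notin> F i (restrict s ({1..n}-{i}))"
  proof (rule kura)
    show "\<forall>i\<in>{1..n}. aleph_le (i - 1) (S i)" using card by blast
    show "\<forall>i\<in>{1..n}. \<forall>t\<in>PiE ({1..n} - {i}) S. finite (F i t)"
      unfolding F_def using fin by blast
  qed
  then obtain s where s: "s \<in> PiE {1..n} S" "\<forall>i\<in>{1..n}. s i \<notin> F i (restrict s ({1..n}-{i}))"
    by blast
  have "\<forall>i \<in> {1..n}. v i (restrict s ({1..n} - {i})) s = 0"
  proof
    fix i assume i: "i \<in> {1..n}"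
    show "v i (restrict s ({1..n} - {i})) s = 0"
    proof (rule ccontr)
      assume "v i (restrict s ({1..n} - {i})) s \<noteq> 0"
      then have "s i \<in> F i (restrict s ({1..n}-{i}))" using s(1) unfolding F_def by blast
      then show False using s(2) i by blast
    qed
  qed
  then show ?thesis using s(1) by blast
qed

end
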